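(* Let $n\ge 1$, let $a_1,\dots,a_n>0$ and $p_1,\dots,p_n>0$ be real numbers, and let $0<r\leq s$. Define $$M_r(a,p)=\left(\frac{\sum_{i=1}^n p_i a_i^r}{\sum_{i=1}^n p_i}\right)^{1/r},\qquad M_s(a,p)=\left(\frac{\sum_{i=1}^n p_i a_i^s}{\sum_{i=1}^n p_i}\right)^{1/s},$$ $$A=\frac{r(s-r)}{2s^2}[M_s(a,p)]^r\cdot\frac{\sum_{i=1}^n p_i\left(\frac{a_i^s}{[M_s(a,p)]^s}-1\right)^2}{\sum_{i=1}^n p_i},$$ $$m=\min\left\{1,\ \frac{a_1^s}{[M_s(a,p)]^s},\dots,\frac{a_n^s}{[M_s(a,p)]^s}\right\},\qquad M=\max\left\{1,\ \frac{a_1^s}{[M_s(a,p)]^s},\dots,\frac{a_n^s}{[M_s(a,p)]^s}\right\}.$$ Then $$\frac{A}{M}\leq[M_s(a,p)]^r-[M_r(a,p)]^r\leq\frac{A}{m}.$$ *)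

theory Defs
  imports Complex_Main
begin

definition power_mean :: "nat \<Rightarrow> real \<Rightarrow> (nat \<Rightarrow> real) \<Rightarrow> (nat \<Rightarrow> real) \<Rightarrow> real" where
  "power_mean n t a p =
     ((\<Sum>i=1..n. p i * a i powr t) / (\<Sum>i=1..n. p i)) powr (1 / t)"

end

theory Submission imports Defs begin

lemma conv_right:
  fixes g gd gdd :: "real \<Rightarrow> real"
  assumes "1 \<le> x"
    and d1: "\<And>t. 1 \<le> t \<Longrightarrow> t \<le> x \<Longrightarrow> DERIV g t :> gd t"
    and d2: "\<And>t. 1 \<le> t \<Longrightarrow> t \<le> x \<Longrightarrow> DERIV gd t :> gdd t"
    and pos: "\<And>t. 1 \<le> t \<Longrightarrow> t \<le> x \<Longrightarrow> gdd t \<ge> 0"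
    and "g 1 = 0" "gd 1 = 0"
  shows "g x \<ge> 0"
proof (cases "x = 1")
  case True thus ?thesis using assms by simp
next
  case False
  hence "1 < x" using assms by simp
  from MVT2[OF this, of g gd] d1 obtain z where z: "1 < z" "z < x" "g x - g 1 = (x - 1) * gd z" by auto
  from MVT2[OF z(1), of gd gdd] d2 z obtain w where w: "1 < w" "w < z" "gd z - gd 1 = (z - 1) * gdd w" by auto
  have "gdd w \<ge> 0" using pos w z by auto
  hence "gd z \<ge> 0" using w assms by simp
  thus ?thesis using z assms \<open>1 < x\<close> by simp
qed

lemma conv_left:
  fixes g gd gdd :: "real \<Rightarrow> real"
  assumes "x \<le> 1"
    and d1: "\<And>t. x \<le> t \<Longrightarrow> t \<le> 1 \<Longrightarrow> DERIV g t :> gd t"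
    and d2: "\<And>t. x \<le> t \<Longrightarrow> t \<le> 1 \<Longrightarrow> DERIV gd t :> gdd t"
    and pos: "\<And>t. x \<le> t \<Longrightarrow> t \<le> 1 \<Longrightarrow> gdd t \<ge> 0"
    and "g 1 = 0" "gd 1 = 0"
  shows "g x \<ge> 0"
proof (cases "x = 1")
  case True thus ?thesis using assms by simp
next
  case False
  hence "x < 1" using assms by simp
  from MVT2[OF this, of g gd] d1 obtain z where z: "x < z" "z < 1" "g 1 - g x = (1 - x) * gd z" by auto
  from MVT2[OF z(2), of gd gdd] d2 z obtain w where w: "z < w" "w < 1" "gd 1 - gd z = (1 - z) * gdd w" by auto
  have "gdd w \<ge> 0" using pos w z by auto
  hence "gd z \<le> 0" using w assms by (smt (verit) mult_nonneg_nonneg)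
  hence "(1 - x) * gd z \<le> 0" using \<open>x<1\<close> by (simp add: mult_nonneg_nonpos)
  thus ?thesis using z assms by simp
qed

lemma d1f: "0 < (t::real) \<Longrightarrow> DERIV (\<lambda>x. 1 + q*(x-1) - x powr q) t :> (q - q * t powr (q-1))"
  by (auto intro!: derivative_eq_intros)
lemma d2f: "0 < (t::real) \<Longrightarrow> DERIV (\<lambda>x. q - q * x powr (q-1)) t :> (q*(1-q) * t powr (q-2))"
  by (auto intro!: derivative_eq_intros simp: algebra_simps)

lemma low_right:
  fixes q x :: real
  assumes "0 < q" "q \<le> 1" "1 \<le> x"
  shows "q*(1-q)/2 * (x-1)^2 / x \<le> 1 + q*(x-1) - x powr q"
proof -
  define C where "C = q*(1-q)/2"
  have "0 \<le> (\<lambda>x. 1 + q*(x-1) - x powr q - C*(x - 2 + inverse x)) x"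
  proof (rule conv_right[where g = "\<lambda>x. 1 + q*(x-1) - x powr q - C*(x - 2 + inverse x)" and gd = "\<lambda>t. q - q * t powr (q-1) - C*(1 - inverse (t^2))"
        and gdd = "\<lambda>t. q*(1-q) * t powr (q-2) - C*(2 * inverse (t^3))"])
    fix t :: real assume t: "1 \<le> t" "t \<le> x"
    show "DERIV (\<lambda>x. 1 + q*(x-1) - x powr q - C*(x - 2 + inverse x)) t :> q - q * t powr (q-1) - C*(1 - inverse (t^2))"
      using t by (auto intro!: derivative_eq_intros simp: power2_eq_square field_simps)
    show "DERIV (\<lambda>t. q - q * t powr (q-1) - C*(1 - inverse (t^2))) t :> q*(1-q) * t powr (q-2) - C*(2 * inverse (t^3))"
      using t by (auto intro!: derivative_eq_intros simp: algebra_simps power2_eq_square power3_eq_cube field_simps)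
    have "t powr (-3) \<le> t powr (q-2)" using t assms by (intro powr_mono) auto
    moreover have "t powr (-3) = inverse (t^3)" using t by (simp add: powr_minus powr_realpow)
    ultimately have "0 \<le> q*(1-q)*(t powr (q-2) - inverse (t^3))" using assms by (intro mult_nonneg_nonneg) auto
    moreover have "q*(1-q) * t powr (q-2) - C*(2 * inverse (t^3)) = q*(1-q)*(t powr (q-2) - inverse (t^3))"
      using t by (simp add: C_def field_simps)
    ultimately show "0 \<le> q*(1-q) * t powr (q-2) - C*(2 * inverse (t^3))" by linarith
  qed (use assms in auto)
  moreover have "(x-1)^2 / x = x - 2 + inverse x" using assms by (simp add: field_simps power2_eq_square)
  moreover have "q*(1-q)/2 * (x-1)^2 / x = C * ((x-1)^2 / x)" by (simp add: C_def)
  ultimately show ?thesis by simp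
qed
lemma low_left:
  fixes q x :: real
  assumes "0 < q" "q \<le> 1" "0 < x" "x \<le> 1"
  shows "q*(1-q)/2 * (x-1)^2 \<le> 1 + q*(x-1) - x powr q"
proof -
  define C where "C = q*(1-q)/2"
  have "0 \<le> (\<lambda>x. 1 + q*(x-1) - x powr q - C*(x-1)^2) x"
  proof (rule conv_left[where g = "\<lambda>x. 1 + q*(x-1) - x powr q - C*(x-1)^2" and gd = "\<lambda>t. q - q * t powr (q-1) - C*(2*(t-1))"
        and gdd = "\<lambda>t. q*(1-q) * t powr (q-2) - C*2"])
    fix t :: real assume t: "x \<le> t" "t \<le> 1"
    hence t0: "0 < t" using assms by simp
    show "DERIV (\<lambda>x. 1 + q*(x-1) - x powr q - C*(x-1)^2) t :> q - q * t powr (q-1) - C*(2*(t-1))"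
      using t0 by (auto intro!: derivative_eq_intros simp: power2_eq_square field_simps)
    show "DERIV (\<lambda>t. q - q * t powr (q-1) - C*(2*(t-1))) t :> q*(1-q) * t powr (q-2) - C*2"
      using t0 by (auto intro!: derivative_eq_intros simp: algebra_simps)
    have "t powr 0 \<le> t powr (q-2)" using t t0 assms by (intro powr_mono') auto
    hence "1 \<le> t powr (q-2)" using t0 by simp
    hence "0 \<le> q*(1-q)*(t powr (q-2) - 1)" using assms by (intro mult_nonneg_nonneg) auto
    moreover have "q*(1-q) * t powr (q-2) - C*2 = q*(1-q)*(t powr (q-2) - 1)"
      by (simp add: C_def field_simps)
    ultimately show "0 \<le> q*(1-q) * t powr (q-2) - C*2" by linarith
  qed (use assms in auto)
  thus ?thesis by (simp add: C_def)
qed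

lemma up_right:
  fixes q x :: real
  assumes "0 < q" "q \<le> 1" "1 \<le> x"
  shows "1 + q*(x-1) - x powr q \<le> q*(1-q)/2 * (x-1)^2"
proof -
  define C where "C = q*(1-q)/2"
  have "0 \<le> (\<lambda>x. C*(x-1)^2 - (1 + q*(x-1) - x powr q)) x"
  proof (rule conv_right[where g = "\<lambda>x. C*(x-1)^2 - (1 + q*(x-1) - x powr q)" and gd = "\<lambda>t. C*(2*(t-1)) - (q - q * t powr (q-1))"
        and gdd = "\<lambda>t. C*2 - q*(1-q) * t powr (q-2)"])
    fix t :: real assume t: "1 \<le> t" "t \<le> x"
    hence t0: "0 < t" using assms by simp
    show "DERIV (\<lambda>x. C*(x-1)^2 - (1 + q*(x-1) - x powr q)) t :> C*(2*(t-1)) - (q - q * t powr (q-1))"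
      using t0 by (auto intro!: derivative_eq_intros simp: power2_eq_square field_simps)
    show "DERIV (\<lambda>t. C*(2*(t-1)) - (q - q * t powr (q-1))) t :> C*2 - q*(1-q) * t powr (q-2)"
      using t0 by (auto intro!: derivative_eq_intros simp: algebra_simps)
    have "t powr (q-2) \<le> t powr 0" using t t0 assms by (intro powr_mono) auto
    hence "t powr (q-2) \<le> 1" using t0 by simp
    hence "0 \<le> q*(1-q)*(1 - t powr (q-2))" using assms by (intro mult_nonneg_nonneg) auto
    moreover have "C*2 - q*(1-q) * t powr (q-2) = q*(1-q)*(1 - t powr (q-2))"
      by (simp add: C_def field_simps)
    ultimately show "0 \<le> C*2 - q*(1-q) * t powr (q-2)" by linarith
  qed (use assms in auto)
  thus ?thesis by (simp add: C_def)
qed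

lemma up_left:
  fixes q x :: real
  assumes "0 < q" "q \<le> 1" "0 < x" "x \<le> 1"
  shows "1 + q*(x-1) - x powr q \<le> q*(1-q)/2 * (x-1)^2 / x"
proof -
  define C where "C = q*(1-q)/2"
  have "0 \<le> (\<lambda>x. C*(x - 2 + inverse x) - (1 + q*(x-1) - x powr q)) x"
  proof (rule conv_left[where g = "\<lambda>x. C*(x - 2 + inverse x) - (1 + q*(x-1) - x powr q)" and gd = "\<lambda>t. C*(1 - inverse (t^2)) - (q - q * t powr (q-1))"
        and gdd = "\<lambda>t. C*(2 * inverse (t^3)) - q*(1-q) * t powr (q-2)"])
    fix t :: real assume t: "x \<le> t" "t \<le> 1"
    hence t0: "0 < t" using assms by simp
    show "DERIV (\<lambda>x. C*(x - 2 + inverse x) - (1 + q*(x-1) - x powr q)) t :> C*(1 - inverse (t^2)) - (q - q * t powr (q-1))"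
      using t0 by (auto intro!: derivative_eq_intros simp: power2_eq_square field_simps)
    show "DERIV (\<lambda>t. C*(1 - inverse (t^2)) - (q - q * t powr (q-1))) t :> C*(2 * inverse (t^3)) - q*(1-q) * t powr (q-2)"
      using t0 by (auto intro!: derivative_eq_intros simp: algebra_simps power2_eq_square power3_eq_cube field_simps)
    have "t powr (q-2) \<le> t powr (-3)" using t t0 assms by (intro powr_mono') auto
    moreover have "t powr (-3) = inverse (t^3)" using t0 by (simp add: powr_minus powr_realpow)
    ultimately have "0 \<le> q*(1-q)*(inverse (t^3) - t powr (q-2))" using assms by (intro mult_nonneg_nonneg) auto
    moreover have "C*(2 * inverse (t^3)) - q*(1-q) * t powr (q-2) = q*(1-q)*(inverse (t^3) - t powr (q-2))"
      using t0 by (simp add: C_def field_simps)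
    ultimately show "0 \<le> C*(2 * inverse (t^3)) - q*(1-q) * t powr (q-2)" by linarith
  qed (use assms in auto)
  moreover have "(x-1)^2 / x = x - 2 + inverse x" using assms by (simp add: field_simps power2_eq_square)
  moreover have "q*(1-q)/2 * (x-1)^2 / x = C * ((x-1)^2 / x)" by (simp add: C_def)
  ultimately show ?thesis by simp
qed

lemma f_bounds:
  fixes q x m M :: real
  assumes "0 < q" "q \<le> 1" "0 < x" "0 < m" "m \<le> 1" "m \<le> x" "1 \<le> M" "x \<le> M"
  shows "q*(1-q)/2 * (x-1)^2 / M \<le> 1 + q*(x-1) - x powr q"
    and "1 + q*(x-1) - x powr q \<le> q*(1-q)/2 * (x-1)^2 / m"
proof -
  have C0: "0 \<le> q*(1-q)/2 * (x-1)^2" using assms by simp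
  show "q*(1-q)/2 * (x-1)^2 / M \<le> 1 + q*(x-1) - x powr q"
  proof (cases "x \<le> 1")
    case True
    have "q*(1-q)/2 * (x-1)^2 / M \<le> q*(1-q)/2 * (x-1)^2 / 1"
      using C0 assms by (intro divide_left_mono) auto
    thus ?thesis using low_left[of q x] True assms by linarith
  next
    case False
    have "q*(1-q)/2 * (x-1)^2 / M \<le> q*(1-q)/2 * (x-1)^2 / x"
      using C0 assms False by (intro divide_left_mono) auto
    thus ?thesis using low_right[of q x] False assms by linarith
  qed
  show "1 + q*(x-1) - x powr q \<le> q*(1-q)/2 * (x-1)^2 / m"
  proof (cases "x \<le> 1")
    case True
    have "q*(1-q)/2 * (x-1)^2 / x \<le> q*(1-q)/2 * (x-1)^2 / m"
      using C0 assms by (intro divide_left_mono) auto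
    thus ?thesis using up_left[of q x] True assms by linarith
  next
    case False
    have "q*(1-q)/2 * (x-1)^2 / 1 \<le> q*(1-q)/2 * (x-1)^2 / m"
      using C0 assms by (intro divide_left_mono) auto
    thus ?thesis using up_right[of q x] False assms by linarith
  qed
qed
theorem mainTheorem2:
  fixes n :: nat and a p :: "nat \<Rightarrow> real" and r s :: real
  assumes "n \<ge> 1"
    and "\<And>i. i \<in> {1..n} \<Longrightarrow> a i > 0"
    and "\<And>i. i \<in> {1..n} \<Longrightarrow> p i > 0"
    and "0 < r" and "r \<le> s"
  defines "Ms \<equiv> power_mean n s a p"
    and "Mr \<equiv> power_mean n r a p"
  defines "A \<equiv> r * (s - r) / (2 * s^2) * Ms powr r *
      ((\<Sum>i=1..n. p i * (a i powr s / Ms powr s - 1)^2) / (\<Sum>i=1..n. p i))"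
    and "m \<equiv> Min (insert 1 ((\<lambda>i. a i powr s / Ms powr s) ` {1..n}))"
    and "M \<equiv> Max (insert 1 ((\<lambda>i. a i powr s / Ms powr s) ` {1..n}))"
  shows "A / M \<le> Ms powr r - Mr powr r \<and> Ms powr r - Mr powr r \<le> A / m"
proof -
  note apos = assms(2) and ppos = assms(3)
  have s0: "0 < s" using assms by simp
  define S where "S = (\<Sum>i=1..n. p i)"
  define Bs where "Bs = (\<Sum>i=1..n. p i * a i powr s)"
  define Br where "Br = (\<Sum>i=1..n. p i * a i powr r)"
  have ne: "{1..n} \<noteq> {}" using assms by simp
  have S0: "0 < S" unfolding S_def using ne ppos by (intro sum_pos) auto
  have Bs0: "0 < Bs" unfolding Bs_def using ne ppos apos by (intro sum_pos) (auto intro!: mult_pos_pos, force)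
  have Br0: "0 < Br" unfolding Br_def using ne ppos apos by (intro sum_pos) (auto intro!: mult_pos_pos, force)
  have Ms_def': "Ms = (Bs / S) powr (1/s)" unfolding Ms_def power_mean_def Bs_def S_def by simp
  have Mr_def': "Mr = (Br / S) powr (1/r)" unfolding Mr_def power_mean_def Br_def S_def by simp
  have Ms0: "0 < Ms" using Ms_def' Bs0 S0 by simp
  have Mss: "Ms powr s = Bs / S" using Ms_def' Bs0 S0 s0 by (simp add: powr_powr)
  have Mrr: "Mr powr r = Br / S" using Mr_def' Br0 S0 assms(4) by (simp add: powr_powr)
  define x where "x i = a i powr s / Ms powr s" for i
  define q where "q = r / s"
  have q0: "0 < q" and q1: "q \<le> 1" using assms s0 by (auto simp: q_def)
  have x0: "0 < x i" if "i \<in> {1..n}" for i using apos[OF that] Ms0 by (simp add: x_def)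
  have sumx: "(\<Sum>i=1..n. p i * x i) = S"
  proof -
    have "(\<Sum>i=1..n. p i * x i) = (\<Sum>i=1..n. p i * a i powr s) / Ms powr s"
      unfolding x_def by (simp add: sum_divide_distrib)
    thus ?thesis using Mss Bs_def Bs0 S0 by simp
  qed
  have xq: "a i powr r = x i powr q * Ms powr r" if "i \<in> {1..n}" for i
  proof -
    have "x i powr q = (a i powr s) powr q / (Ms powr s) powr q"
      unfolding x_def using apos[OF that] Ms0 by (simp add: powr_divide)
    also have "\<dots> = a i powr r / Ms powr r" using s0 by (simp add: powr_powr q_def)
    finally show ?thesis using Ms0 by simp
  qed
  define f where "f y = 1 + q*(y-1) - y powr q" for y
  have sumf: "(\<Sum>i=1..n. p i * f (x i)) = S - (\<Sum>i=1..n. p i * x i powr q)"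
  proof -
    have "(\<Sum>i=1..n. p i * f (x i)) = (\<Sum>i=1..n. p i) + q * ((\<Sum>i=1..n. p i * x i) - (\<Sum>i=1..n. p i)) - (\<Sum>i=1..n. p i * x i powr q)"
      unfolding f_def by (simp add: algebra_simps sum.distrib sum_subtractf sum_distrib_left)
    thus ?thesis using sumx S_def by simp
  qed
  have BrS: "Br = Ms powr r * (\<Sum>i=1..n. p i * x i powr q)"
    unfolding Br_def sum_distrib_left by (rule sum.cong) (simp_all add: xq)
  define K where "K = Ms powr r / S"
  have K0: "0 < K" using Ms0 S0 by (simp add: K_def)
  have diff: "Ms powr r - Mr powr r = K * (\<Sum>i=1..n. p i * f (x i))"
    unfolding K_def sumf Mrr BrS using S0 by (simp add: field_simps)
  define C where "C = q*(1-q)/2"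
  define Q where "Q = (\<Sum>i=1..n. p i * (x i - 1)^2)"
  have A_eq: "A = K * (C * Q)"
    unfolding A_def K_def C_def Q_def q_def x_def S_def using s0 by (simp add: field_simps power2_eq_square)
  have fin: "finite (insert 1 (x ` {1..n}))" by simp
  have m_eq: "m = Min (insert 1 (x ` {1..n}))" unfolding m_def x_def by simp
  have M_eq: "M = Max (insert 1 (x ` {1..n}))" unfolding M_def x_def by simp
  have m_in: "m \<in> insert 1 (x ` {1..n})" unfolding m_eq by (rule Min_in) auto
  have m0: "0 < m" using m_in x0 by auto
  have m1: "m \<le> 1" unfolding m_eq by (rule Min_le) auto
  have mx: "m \<le> x i" if "i \<in> {1..n}" for i unfolding m_eq using that by (intro Min_le) auto
  have M1: "1 \<le> M" unfolding M_eq by (rule Max_ge) auto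
  have Mx: "x i \<le> M" if "i \<in> {1..n}" for i unfolding M_eq using that by (intro Max_ge) auto
  have lo: "(\<Sum>i=1..n. p i * (C * (x i - 1)^2 / M)) \<le> (\<Sum>i=1..n. p i * f (x i))"
    unfolding C_def f_def
    by (intro sum_mono mult_left_mono f_bounds(1)[OF q0 q1 x0 m0 m1 mx M1 Mx]) (auto intro: less_imp_le[OF ppos])
  have hi: "(\<Sum>i=1..n. p i * f (x i)) \<le> (\<Sum>i=1..n. p i * (C * (x i - 1)^2 / m))"
    unfolding C_def f_def
    by (intro sum_mono mult_left_mono f_bounds(2)[OF q0 q1 x0 m0 m1 mx M1 Mx]) (auto intro: less_imp_le[OF ppos])
  have lo': "(\<Sum>i=1..n. p i * (C * (x i - 1)^2 / M)) = C * Q / M"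
    unfolding Q_def by (simp add: sum_distrib_left sum_divide_distrib algebra_simps)
  have hi': "(\<Sum>i=1..n. p i * (C * (x i - 1)^2 / m)) = C * Q / m"
    unfolding Q_def by (simp add: sum_distrib_left sum_divide_distrib algebra_simps)
  have "A / M = K * (C * Q / M)" using A_eq by simp
  also have "\<dots> \<le> K * (\<Sum>i=1..n. p i * f (x i))" using lo lo' K0 by (intro mult_left_mono) auto
  finally have L: "A / M \<le> Ms powr r - Mr powr r" using diff by simp
  have "Ms powr r - Mr powr r \<le> K * (C * Q / m)" unfolding diff using hi hi' K0 by (intro mult_left_mono) auto
  also have "\<dots> = A / m" using A_eq by simp
  finally show ?thesis using L by simp
qed
end
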